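(* Let $B_{n,k}=[x^n]\,\frac{1+3x^2}{1+x^2}\left(\frac{x}{1+x^2}\right)^k$ be the coefficient array of the Boubaker polynomials (the case $r=3$ of the restricted Chebyshev–Boubaker polynomials). Then for all $n\ge 0$, $B_{2n,n}=0^n$, i.e. $B_{0,0}=1$ and $B_{2n,n}=0$ for $n\ge 1$.
   Context: $[x^n]h(x)$ denotes the coefficient of $x^n$ in $h(x)$; $0^n$ is $1$ for $n=0$ and $0$ for $n>0$. The Boubaker polynomials are $B_n(x)=\sum_k B_{n,k}x^k$. *)

theory Defs
  imports "HOL-Computational_Algebra.Formal_Power_Series"
begin

definition boubaker_gf :: "nat \<Rightarrow> rat fps" where
  "boubaker_gf k = (1 + 3 * fps_X ^ 2) / (1 + fps_X ^ 2) * (fps_X / (1 + fps_X ^ 2)) ^ k"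

definition boubaker_coeff :: "nat \<Rightarrow> nat \<Rightarrow> rat" where
  "boubaker_coeff n k = fps_nth (boubaker_gf k) n"

end

theory Submission
  imports Defs
begin

definition qc :: "nat \<Rightarrow> nat \<Rightarrow> rat" where
  "qc N j = (if even j then (-1) ^ (j div 2) * of_nat ((N + j div 2) choose (j div 2)) else 0)"

definition Q :: "nat \<Rightarrow> rat fps" where "Q N = Abs_fps (qc N)"

lemma mul_D_nth: "fps_nth (f * (1 + fps_X ^ 2)) j = fps_nth f j + (if j < 2 then 0 else fps_nth f (j - 2))"
  by (simp add: distrib_left fps_X_power_mult_right_nth)

lemma Q0: "Q 0 * (1 + fps_X ^ 2) = 1"
proof (rule fps_ext)
  fix j
  show "fps_nth (Q 0 * (1 + fps_X ^ 2)) j = fps_nth (1::rat fps) j"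
  proof (cases "j < 2")
    case True then show ?thesis
      by (auto simp: mul_D_nth Q_def qc_def less_2_cases_iff)
  next
    case False
    then obtain i where i: "j = i + 2" by (metis add.commute le_add_diff_inverse not_less)
    show ?thesis
      by (auto simp: mul_D_nth Q_def qc_def i)
  qed
qed

lemma QS: "Q (Suc N) * (1 + fps_X ^ 2) = Q N"
proof (rule fps_ext)
  fix j
  show "fps_nth (Q (Suc N) * (1 + fps_X ^ 2)) j = fps_nth (Q N) j"
  proof (cases "j < 2")
    case True then show ?thesis
      by (auto simp: mul_D_nth Q_def qc_def less_2_cases_iff)
  next
    case False
    then obtain i where i: "j = i + 2" by (metis add.commute le_add_diff_inverse not_less)
    show ?thesis
    proof (cases "even i")
      case False then show ?thesis by (auto simp: mul_D_nth Q_def qc_def i)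
    next
      case True
      then obtain m where m: "i = 2 * m" by blast
      have l: "fps_nth (Q (Suc N) * (1 + fps_X ^ 2)) j = qc (Suc N) (2 * m + 2) + qc (Suc N) (2 * m)"
        by (simp add: mul_D_nth Q_def i m)
      have r: "fps_nth (Q N) j = qc N (2 * m + 2)" by (simp add: Q_def i m)
      have d: "(2 * m + 2) div 2 = Suc m" "(2 * m) div 2 = m" by auto
      have b: "(Suc N + Suc m) choose Suc m = (N + Suc m choose Suc m) + (Suc N + m choose m)"
      proof -
        have "Suc N + Suc m = Suc (Suc N + m)" "N + Suc m = Suc N + m" by simp_all
        then show ?thesis by (simp only: binomial_Suc_Suc add.commute)
      qed
      have b': "(of_nat ((Suc N + Suc m) choose Suc m) :: rat) = of_nat (N + Suc m choose Suc m) + of_nat (Suc N + m choose m)"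
        by (simp only: b of_nat_add)
      show ?thesis unfolding l r qc_def d
        by (simp only: b' if_True even_mult_iff even_add even_numeral power_Suc) (simp add: algebra_simps)
    qed
  qed
qed

lemma Q_inv: "inverse ((1 + fps_X ^ 2) ^ Suc N) = Q N"
proof -
  have "(1 + fps_X ^ 2) ^ Suc N * Q N = 1"
  proof (induction N)
    case 0 then show ?case using Q0 by (simp add: mult.commute)
  next
    case (Suc N)
    have "(1 + fps_X ^ 2) ^ Suc (Suc N) * Q (Suc N)
        = (1 + fps_X ^ 2) ^ Suc N * (Q (Suc N) * (1 + fps_X ^ 2))"
      by (simp add: mult_ac)
    also have "\<dots> = (1 + fps_X ^ 2) ^ Suc N * Q N" by (simp only: QS)
    also have "\<dots> = 1" by (rule Suc.IH)
    finally show ?case .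
  qed
  then show ?thesis by (rule fps_inverse_unique)
qed

lemma gf_eq: "boubaker_gf k = fps_X ^ k * ((1 + 3 * fps_X ^ 2) * Q k)"
proof -
  let ?D = "1 + fps_X ^ 2 :: rat fps"
  have d0: "fps_nth ?D 0 \<noteq> 0" by simp
  have "boubaker_gf k = (1 + 3 * fps_X ^ 2) * inverse ?D * (fps_X * inverse ?D) ^ k"
    unfolding boubaker_gf_def using d0 by (simp add: fps_divide_unit)
  also have "\<dots> = fps_X ^ k * ((1 + 3 * fps_X ^ 2) * (inverse ?D) ^ Suc k)"
    by (simp add: power_mult_distrib algebra_simps)
  also have "(inverse ?D) ^ Suc k = inverse (?D ^ Suc k)"
    by (simp add: fps_inverse_power fps_inverse_mult)
  finally show ?thesis by (simp only: Q_inv)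
qed

lemma three_nth: "fps_nth (3 * (g :: rat fps)) j = 3 * fps_nth g j"
  by (simp add: numeral_fps_const)

lemma mul_3_nth: "fps_nth ((1 + 3 * fps_X ^ 2) * (f :: rat fps)) j = fps_nth f j + 3 * (if j < 2 then 0 else fps_nth f (j - 2))"
  by (simp add: distrib_right fps_X_power_mult_nth mult.assoc three_nth)

theorem mainTheorem4:
  fixes n :: nat
  shows "boubaker_coeff (2 * n) n = (0::rat) ^ n"
proof -
  have c: "boubaker_coeff (2 * n) n = qc n n + 3 * (if n < 2 then 0 else qc n (n - 2))"
    unfolding boubaker_coeff_def gf_eq by (simp add: fps_X_power_mult_nth mul_3_nth Q_def)
  show ?thesis
  proof (cases "n = 0")
    case True then show ?thesis using c by (simp add: qc_def)
  next
    case n0: False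
    show ?thesis
    proof (cases "even n")
      case False
      then have "odd (n - 2)" if "\<not> n < 2" using that by auto
      then show ?thesis using False n0 by (auto simp: c qc_def)
    next
      case True
      then obtain m where m: "n = 2 * m" by blast
      with n0 have m0: "m > 0" by simp
      then obtain p where p: "m = Suc p" using gr0_implies_Suc by blast
      have e1: "n div 2 = m" "(n - 2) div 2 = p" "\<not> n < 2" "even (n - 2)" using m p by auto
      have bin: "(n + m choose m) = 3 * (n + p choose p)"
      proof -
        have "m * (3 * m choose m) = 3 * m * ((3 * m - 1) choose (m - 1))"
          using times_binomial_minus1_eq[OF m0, of "3*m"] by simp
        then have "(3 * m choose m) = 3 * ((3 * m - 1) choose (m - 1))"
          using m0 by (metis mult.assoc mult.left_commute mult_cancel_left gr_implies_not0)
        moreover have "3 * m - 1 = n + p" "m - 1 = p" "n + m = 3 * m" using p m by auto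
        ultimately show ?thesis by simp
      qed
      have q1: "qc n n = (-1) ^ m * of_nat (n + m choose m)"
        unfolding qc_def using True e1 by simp
      have q2: "qc n (n - 2) = (-1) ^ p * of_nat (n + p choose p)"
      proof -
        show ?thesis unfolding qc_def using e1 by simp
      qed
      have "qc n n + 3 * qc n (n - 2) = 0"
      proof -
        have "qc n n = - ((-1) ^ p * (3 * of_nat (n + p choose p)))"
        proof -
          have "(-1::rat) ^ m = - ((-1) ^ p)" using p by simp
          then show ?thesis unfolding q1 bin of_nat_mult by simp
        qed
        then show ?thesis unfolding q2 by simp
      qed
      then show ?thesis using e1 n0 by (simp add: c)
    qed
  qed
qed

end
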